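(* Let $(G=(V,E),(p_e))$ be an IC model instance, $\pi$ a policy, $k,d\in\mathbb{Z}^+$. Then $F(\pi,k,d)=F_L(\pi,k,d)$.
   Context: IC model: directed graph $G=(V,E)$, each edge $e$ independently live with probability $p_e\in(0,1]$. Diffusion proceeds in rounds: in each round every node activated in the previous round (seed nodes count as activated when seeded) attempts to activate each inactive out-neighbor along an edge, succeeding iff the edge is live; attempted edges become observed. A realization $\phi=(L(\phi),D(\phi))$ records the observed live and dead edges; $\phi_\emptyset=(\emptyset,\emptyset)$. A policy $\pi$ maps a pair $(S,\phi)$ (current active set, current observed realization) to a single node. The $(\pi,k,d)$-process: set $(S,\phi)=(\emptyset,\phi_\emptyset)$; repeat $k$ times: select and activate $\pi(S,\phi)$, then observe the diffusion for $d$ rounds and update $(S,\phi)$ to the current active set and observed realization; finally let the diffusion terminate. $F(\pi,k,d)$ is the expected final number of active nodes. The L-$(\pi,k,d)$-process: set $(S,\phi)=(\emptyset,\phi_\emptyset)$; repeat $k-1$ times: select and activate $\pi(S,\phi)$, then observe $d$ rounds and update $(S,\phi)$; then decide $v^*=\pi(S,\phi)$ without activating it, wait for the diffusion to terminate, then activate $v^*$ and wait for the diffusion to terminate. $F_L(\pi,k,d)$ is the expected final number of active nodes of this process. *)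

theory Defs
  imports Complex_Main
begin

text \<open>Independent Cascade model on a finite directed graph whose vertex set is the
  (finite) type 'v; E is the edge set. A world w (subset of E) fixes which edges are live.
  A diffusion state is (S, L, D, A): active set S, observed live edges L, observed dead
  edges D, and frontier A = nodes activated in the previous round (or just seeded),
  which attempt to activate their out-neighbours in the next round.\<close>

type_synonym 'v edge = "'v \<times> 'v"
type_synonym 'v realization = "'v edge set \<times> 'v edge set"
type_synonym 'v state = "'v set \<times> 'v edge set \<times> 'v edge set \<times> 'v set"
type_synonym 'v policy = "'v set \<Rightarrow> 'v realization \<Rightarrow> 'v"

definition act :: "'v state \<Rightarrow> 'v set" where
  "act st = fst st"

definition obs :: "'v state \<Rightarrow> 'v realization" where
  "obs st = (case st of (S, L, D, A) \<Rightarrow> (L, D))"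

definition frontier :: "'v state \<Rightarrow> 'v set" where
  "frontier st = (case st of (S, L, D, A) \<Rightarrow> A)"

definition round :: "'v edge set \<Rightarrow> 'v edge set \<Rightarrow> 'v state \<Rightarrow> 'v state" where
  "round E w st = (case st of (S, L, D, A) \<Rightarrow>
     (let T = {(u, v). (u, v) \<in> E \<and> u \<in> A \<and> v \<notin> S};
          N = snd ` (T \<inter> w)
      in (S \<union> N, L \<union> (T \<inter> w), D \<union> (T - w), N)))"

definition seed :: "'v \<Rightarrow> 'v state \<Rightarrow> 'v state" where
  "seed v st = (case st of (S, L, D, A) \<Rightarrow>
     (if v \<in> S then (S, L, D, A) else (S \<union> {v}, L, D, A \<union> {v})))"

definition terminate :: "'v edge set \<Rightarrow> 'v edge set \<Rightarrow> 'v state \<Rightarrow> 'v state" where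
  "terminate E w st =
     (round E w ^^ (LEAST n. frontier ((round E w ^^ n) st) = {})) st"

definition init_state :: "'v state" where
  "init_state = ({}, {}, {}, {})"

definition pstep :: "'v policy \<Rightarrow> nat \<Rightarrow> 'v edge set \<Rightarrow> 'v edge set \<Rightarrow> 'v state \<Rightarrow> 'v state" where
  "pstep \<pi> d E w st = (round E w ^^ d) (seed (\<pi> (act st) (obs st)) st)"

definition final_std :: "'v policy \<Rightarrow> nat \<Rightarrow> nat \<Rightarrow> 'v edge set \<Rightarrow> 'v edge set \<Rightarrow> 'v set" where
  "final_std \<pi> k d E w = act (terminate E w ((pstep \<pi> d E w ^^ k) init_state))"

definition final_L :: "'v policy \<Rightarrow> nat \<Rightarrow> nat \<Rightarrow> 'v edge set \<Rightarrow> 'v edge set \<Rightarrow> 'v set" where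
  "final_L \<pi> k d E w =
     (let st = (pstep \<pi> d E w ^^ (k - 1)) init_state;
          vstar = \<pi> (act st) (obs st)
      in act (terminate E w (seed vstar (terminate E w st))))"

definition world_prob :: "'v edge set \<Rightarrow> ('v edge \<Rightarrow> real) \<Rightarrow> 'v edge set \<Rightarrow> real" where
  "world_prob E p w = (\<Prod>e\<in>E. if e \<in> w then p e else 1 - p e)"

definition F :: "'v::finite edge set \<Rightarrow> ('v edge \<Rightarrow> real) \<Rightarrow> 'v policy \<Rightarrow> nat \<Rightarrow> nat \<Rightarrow> real" where
  "F E p \<pi> k d = (\<Sum>w\<in>Pow E. world_prob E p w * real (card (final_std \<pi> k d E w)))"

definition F_L :: "'v::finite edge set \<Rightarrow> ('v edge \<Rightarrow> real) \<Rightarrow> 'v policy \<Rightarrow> nat \<Rightarrow> nat \<Rightarrow> real" where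
  "F_L E p \<pi> k d = (\<Sum>w\<in>Pow E. world_prob E p w * real (card (final_L \<pi> k d E w)))"

end

theory Submission
  imports Defs
begin

definition Inv :: "'v edge set \<Rightarrow> 'v edge set \<Rightarrow> 'v state \<Rightarrow> bool" where
  "Inv E w st = (frontier st \<subseteq> act st \<and>
     (\<forall>u v. u \<in> act st \<longrightarrow> u \<notin> frontier st \<longrightarrow> (u,v) \<in> E \<longrightarrow> (u,v) \<in> w \<longrightarrow> v \<in> act st))"

lemma round_eq: "round E w (S,L,D,A) =
  (S \<union> snd ` ({(u, v). (u, v) \<in> E \<and> u \<in> A \<and> v \<notin> S} \<inter> w),
   L \<union> ({(u, v). (u, v) \<in> E \<and> u \<in> A \<and> v \<notin> S} \<inter> w),
   D \<union> ({(u, v). (u, v) \<in> E \<and> u \<in> A \<and> v \<notin> S} - w),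
   snd ` ({(u, v). (u, v) \<in> E \<and> u \<in> A \<and> v \<notin> S} \<inter> w))"
  by (simp add: round_def Let_def)

lemma round_inv: "Inv E w st \<Longrightarrow> Inv E w (round E w st)"
proof -
  assume I: "Inv E w st"
  obtain S L D A where st: "st = (S,L,D,A)" by (cases st) auto
  have AS: "A \<subseteq> S" and cl: "\<And>u v. u \<in> S \<Longrightarrow> u \<notin> A \<Longrightarrow> (u,v) \<in> E \<Longrightarrow> (u,v) \<in> w \<Longrightarrow> v \<in> S"
    using I unfolding st Inv_def act_def frontier_def by auto
  have key: "\<And>u v. u \<in> A \<Longrightarrow> (u,v) \<in> E \<Longrightarrow> (u,v) \<in> w \<Longrightarrow> v \<notin> S \<Longrightarrow>
     v \<in> snd ` ({(u, v). (u, v) \<in> E \<and> u \<in> A \<and> v \<notin> S} \<inter> w)"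
    by (rule_tac x="(u,v)" in image_eqI) auto
  show ?thesis
    unfolding st round_eq Inv_def act_def frontier_def
  proof (simp only: fst_conv prod.case, intro conjI allI impI)
    show "snd ` ({(u, v). (u, v) \<in> E \<and> u \<in> A \<and> v \<notin> S} \<inter> w)
      \<subseteq> S \<union> snd ` ({(u, v). (u, v) \<in> E \<and> u \<in> A \<and> v \<notin> S} \<inter> w)" by (rule Un_upper2)
  next
    fix u v
    assume a: "u \<in> S \<union> snd ` ({(u, v). (u, v) \<in> E \<and> u \<in> A \<and> v \<notin> S} \<inter> w)"
      and b: "u \<notin> snd ` ({(u, v). (u, v) \<in> E \<and> u \<in> A \<and> v \<notin> S} \<inter> w)"
      and c: "(u, v) \<in> E" and d: "(u, v) \<in> w"
    have uS: "u \<in> S" using a b by simp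
    show "v \<in> S \<union> snd ` ({(u, v). (u, v) \<in> E \<and> u \<in> A \<and> v \<notin> S} \<inter> w)"
    proof (cases "u \<in> A")
      case True
      then show ?thesis using key[OF True c d] by (cases "v \<in> S") simp_all
    next
      case False
      then show ?thesis using cl[OF uS False c d] by simp
    qed
  qed
qed

lemma Image_stable:
  assumes "X \<subseteq> Y" "Y \<subseteq> r\<^sup>* `` X"
  shows "r\<^sup>* `` Y = r\<^sup>* `` X"
proof
  show "r\<^sup>* `` X \<subseteq> r\<^sup>* `` Y" using assms(1) by blast
  show "r\<^sup>* `` Y \<subseteq> r\<^sup>* `` X"
  proof
    fix z assume "z \<in> r\<^sup>* `` Y"
    then obtain y where y: "y \<in> Y" "(y,z) \<in> r\<^sup>*" by blast
    then obtain x where "x \<in> X" "(x,y) \<in> r\<^sup>*" using assms(2) by blast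
    then show "z \<in> r\<^sup>* `` X" using y rtrancl_trans by fastforce
  qed
qed

lemma round_reach: "Inv E w st \<Longrightarrow>
  (E \<inter> w)\<^sup>* `` act (round E w st) = (E \<inter> w)\<^sup>* `` act st"
proof -
  assume I: "Inv E w st"
  obtain S L D A where st: "st = (S,L,D,A)" by (cases st) auto
  have AS: "A \<subseteq> S" using I unfolding st Inv_def act_def frontier_def by simp
  show ?thesis
    unfolding st
  proof (rule Image_stable)
    show "act (S, L, D, A) \<subseteq> act (round E w (S, L, D, A))"
      by (auto simp: round_eq act_def)
    show "act (round E w (S, L, D, A)) \<subseteq> (E \<inter> w)\<^sup>* `` act (S, L, D, A)"
    proof
      fix x assume "x \<in> act (round E w (S, L, D, A))"
      then have "x \<in> S \<or> (\<exists>a. (a, x) \<in> E \<and> a \<in> A \<and> (a, x) \<in> w)"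
        by (auto simp: round_eq act_def)
      then show "x \<in> (E \<inter> w)\<^sup>* `` act (S, L, D, A)"
        using AS by (auto simp: act_def)
    qed
  qed
qed

lemma iter: "Inv E w st \<Longrightarrow> Inv E w ((round E w ^^ n) st) \<and>
   (E \<inter> w)\<^sup>* `` act ((round E w ^^ n) st) = (E \<inter> w)\<^sup>* `` act st"
  by (induction n) (auto simp: round_inv round_reach)

lemma round_front: "frontier (round E w st) \<noteq> {} \<Longrightarrow>
   act st \<subset> act (round E w st)"
proof -
  assume h: "frontier (round E w st) \<noteq> {}"
  obtain S L D A where st: "st = (S,L,D,A)" by (cases st) auto
  from h obtain a b where ab: "(a,b) \<in> E" "a \<in> A" "b \<notin> S" "(a,b) \<in> w"
    unfolding st by (auto simp: round_eq frontier_def)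
  have "b \<in> snd ` ({(u, v). (u, v) \<in> E \<and> u \<in> A \<and> v \<notin> S} \<inter> w)"
    by (rule image_eqI[where x="(a,b)"]) (use ab in auto)
  then show ?thesis using ab unfolding st by (auto simp: round_eq act_def)
qed

lemma card_grow:
  fixes st :: "('v::finite) state"
  shows "frontier ((round E w ^^ n) st) \<noteq> {} \<Longrightarrow> n \<le> card (act ((round E w ^^ n) st))"
proof (induction n)
  case 0 then show ?case by simp
next
  case (Suc n)
  have ps: "act ((round E w ^^ n) st) \<subset> act ((round E w ^^ Suc n) st)"
    using round_front[of E w "(round E w ^^ n) st"] Suc.prems by simp
  have "frontier ((round E w ^^ n) st) \<noteq> {}"
  proof
    assume e: "frontier ((round E w ^^ n) st) = {}"
    obtain S L D A where st: "(round E w ^^ n) st = (S,L,D,A)" by (cases "(round E w ^^ n) st") auto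
    from Suc.prems e show False unfolding funpow.simps o_def st
      by (simp add: round_eq frontier_def)
  qed
  then have "n \<le> card (act ((round E w ^^ n) st))" using Suc.IH by simp
  moreover have "card (act ((round E w ^^ n) st)) < card (act ((round E w ^^ Suc n) st))"
    using ps by (simp add: psubset_card_mono)
  ultimately show ?case by simp
qed

lemma term_exists:
  fixes st :: "('v::finite) state"
  shows "\<exists>n. frontier ((round E w ^^ n) st) = {}"
proof (rule ccontr)
  assume "\<not> ?thesis"
  then have "Suc (card (UNIV :: 'v set)) \<le> card (act ((round E w ^^ Suc (card (UNIV :: 'v set))) st))"
    using card_grow by blast
  moreover have "card (act ((round E w ^^ Suc (card (UNIV :: 'v set))) st)) \<le> card (UNIV :: 'v set)"
    by (simp add: card_mono)
  ultimately show False by simp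
qed

lemma closed_reach:
  assumes "\<forall>u v. u \<in> S \<longrightarrow> (u,v) \<in> r \<longrightarrow> v \<in> S"
  shows "r\<^sup>* `` S = S"
proof
  show "r\<^sup>* `` S \<subseteq> S"
  proof
    fix z assume "z \<in> r\<^sup>* `` S"
    then obtain x where x: "x \<in> S" "(x,z) \<in> r\<^sup>*" by blast
    from x(2) x(1) show "z \<in> S"
      by (induction rule: rtrancl_induct) (use assms in blast)+
  qed
qed blast

lemma terminate_lem:
  fixes st :: "('v::finite) state"
  assumes I: "Inv E w st"
  shows "Inv E w (terminate E w st) \<and> act (terminate E w st) = (E \<inter> w)\<^sup>* `` act st"
proof -
  define m where "m = (LEAST n. frontier ((round E w ^^ n) st) = {})"
  have fe: "frontier ((round E w ^^ m) st) = {}"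
    unfolding m_def using term_exists LeastI_ex by fast
  have t: "terminate E w st = (round E w ^^ m) st" unfolding terminate_def m_def by simp
  have it: "Inv E w ((round E w ^^ m) st)"
    "(E \<inter> w)\<^sup>* `` act ((round E w ^^ m) st) = (E \<inter> w)\<^sup>* `` act st"
    using iter[OF I] by auto
  have "(E \<inter> w)\<^sup>* `` act ((round E w ^^ m) st) = act ((round E w ^^ m) st)"
    by (rule closed_reach) (use it(1) fe in \<open>auto simp: Inv_def\<close>)
  then show ?thesis using it t by simp
qed

lemma seed_inv: "Inv E w st \<Longrightarrow> Inv E w (seed v st) \<and> act (seed v st) = insert v (act st)"
proof -
  assume I: "Inv E w st"
  obtain S L D A where st: "st = (S,L,D,A)" by (cases st) auto
  show ?thesis using I unfolding st by (auto simp: seed_def Inv_def act_def frontier_def)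
qed

lemma pstep_inv: "Inv E w st \<Longrightarrow> Inv E w (pstep \<pi> d E w st)"
proof -
  assume "Inv E w st"
  then have "Inv E w (seed (\<pi> (act st) (obs st)) st)" by (rule seed_inv[THEN conjunct1])
  then show ?thesis unfolding pstep_def by (rule iter[THEN conjunct1])
qed

lemma pstep_iter_inv: "Inv E w ((pstep \<pi> d E w ^^ n) init_state)"
proof (induction n)
  case 0 then show ?case by (simp add: Inv_def init_state_def act_def frontier_def)
next
  case (Suc n) then show ?case by (simp add: pstep_inv)
qed

lemma world_eq:
  fixes E :: "('v::finite) edge set"
  assumes "k \<ge> 1"
  shows "final_std \<pi> k d E w = final_L \<pi> k d E w"
proof -
  define st where "st = (pstep \<pi> d E w ^^ (k - 1)) init_state"
  define v where "v = \<pi> (act st) (obs st)"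
  have I: "Inv E w st" unfolding st_def by (rule pstep_iter_inv)
  have k: "k = Suc (k - 1)" using assms by simp
  have "(pstep \<pi> d E w ^^ k) init_state = pstep \<pi> d E w st"
    unfolding st_def by (subst k) simp
  then have std: "final_std \<pi> k d E w = act (terminate E w ((round E w ^^ d) (seed v st)))"
    unfolding final_std_def pstep_def v_def by simp
  have sI: "Inv E w (seed v st)" "act (seed v st) = insert v (act st)" using seed_inv[OF I] by auto
  have std2: "final_std \<pi> k d E w = (E \<inter> w)\<^sup>* `` insert v (act st)"
    using std terminate_lem[OF iter[OF sI(1), THEN conjunct1, of d]] iter[OF sI(1), of d] sI(2) by simp
  have L: "final_L \<pi> k d E w = act (terminate E w (seed v (terminate E w st)))"
    unfolding final_L_def st_def v_def by (simp add: Let_def)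
  have tI: "Inv E w (terminate E w st)" "act (terminate E w st) = (E \<inter> w)\<^sup>* `` act st"
    using terminate_lem[OF I] by auto
  have s2: "Inv E w (seed v (terminate E w st))"
    "act (seed v (terminate E w st)) = insert v ((E \<inter> w)\<^sup>* `` act st)"
    using seed_inv[OF tI(1)] tI(2) by auto
  have L2: "final_L \<pi> k d E w = (E \<inter> w)\<^sup>* `` insert v ((E \<inter> w)\<^sup>* `` act st)"
    using L terminate_lem[OF s2(1)] s2(2) by simp
  have "(E \<inter> w)\<^sup>* `` insert v ((E \<inter> w)\<^sup>* `` act st) = (E \<inter> w)\<^sup>* `` insert v (act st)"
    by (rule Image_stable) auto
  then show ?thesis using std2 L2 by simp
qed

theorem lemma2:
  fixes E :: "('v::finite) edge set" and p :: "'v edge \<Rightarrow> real"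
    and \<pi> :: "'v policy" and k d :: nat
  assumes "\<forall>e\<in>E. 0 < p e \<and> p e \<le> 1"
    and "k \<ge> 1" and "d \<ge> 1"
  shows "F E p \<pi> k d = F_L E p \<pi> k d"
  unfolding F_def F_L_def
  by (rule sum.cong) (simp_all add: world_eq[OF assms(2), of \<pi> d E])

end
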